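(* Fix integers $n \ge 2$, $1 \le i \le n-1$, and positive integers $e_1, \ldots, e_{n-1}$. For a prime $p$ and integers $a_{rs}$ ($1 \le r < s \le n-1$) with $0 \le a_{rs} < p^{e_r - 1}$, let $A = A(p,(a_{rs}))$ be the $n\times n$ upper triangular integer matrix with $A_{rr} = p^{e_r}$ for $r < n$, $A_{nn} = 1$, $A_{rs} = p\,a_{rs}$ for $1 \le r < s \le n-1$, last column $(1,\ldots,1)^T$, and zeros below the diagonal; denote its columns by $v_1, \ldots, v_n$. Then the number of choices of the tuple $\{a_{rs} : 1 \le r < s \le i\}$ (with $0 \le a_{rs} < p^{e_r-1}$) such that $v_i \circ v_i$ lies in the $\mathbb{Z}$-column span of $A$ is a polynomial in $p$; that is, there is a polynomial $P \in \mathbb{Q}[x]$ (depending on $n, i, e_1,\ldots,e_{n-1}$) such that this number equals $P(p)$ for every prime $p$.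
   Context: For vectors $x=(x_1,\ldots,x_n)^T$, $y=(y_1,\ldots,y_n)^T$, $x \circ y = (x_1y_1, \ldots, x_ny_n)^T$ denotes the componentwise product. The condition $v_i \circ v_i \in \mathrm{Col}(A)$ means $v_i\circ v_i = A x$ for some $x \in \mathbb{Z}^n$; it only involves the variables $a_{rs}$ with $s \le i$. *)

theory Defs
  imports Main "HOL-Computational_Algebra.Polynomial" "HOL-Computational_Algebra.Primes"
begin

text \<open>Matrices are functions nat => nat => int with 1-based indices 1..n.\<close>
definition Amat :: "nat \<Rightarrow> (nat \<Rightarrow> nat) \<Rightarrow> int \<Rightarrow> (nat \<Rightarrow> nat \<Rightarrow> int) \<Rightarrow> nat \<Rightarrow> nat \<Rightarrow> int" where
  "Amat n e p a r s =
     (if s = n then 1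
      else if r = s then p ^ (e r)
      else if r < s then p * a r s
      else 0)"

definition col :: "(nat \<Rightarrow> nat \<Rightarrow> int) \<Rightarrow> nat \<Rightarrow> nat \<Rightarrow> int" where
  "col M j = (\<lambda>r. M r j)"

definition hadamard :: "(nat \<Rightarrow> int) \<Rightarrow> (nat \<Rightarrow> int) \<Rightarrow> nat \<Rightarrow> int" where
  "hadamard x y = (\<lambda>r. x r * y r)"

definition in_int_col_span :: "nat \<Rightarrow> (nat \<Rightarrow> nat \<Rightarrow> int) \<Rightarrow> (nat \<Rightarrow> int) \<Rightarrow> bool" where
  "in_int_col_span n M w =
     (\<exists>x :: nat \<Rightarrow> int. \<forall>r \<in> {1..n}. w r = (\<Sum>s = 1..n. M r s * x s))"

definition tuples :: "nat \<Rightarrow> (nat \<Rightarrow> nat) \<Rightarrow> nat \<Rightarrow> (nat \<Rightarrow> nat \<Rightarrow> int) set" where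
  "tuples i e p =
     {a. (\<forall>r s. 1 \<le> r \<and> r < s \<and> s \<le> i \<longrightarrow> 0 \<le> a r s \<and> a r s < int p ^ (e r - 1)) \<and>
         (\<forall>r s. \<not> (1 \<le> r \<and> r < s \<and> s \<le> i) \<longrightarrow> a r s = 0)}"

text \<open>The count: number of admissible tuples such that v_i o v_i is in Col(A).
  Entries a_rs with s > i (which the condition does not involve) are set to 0.\<close>
definition count_sq :: "nat \<Rightarrow> nat \<Rightarrow> (nat \<Rightarrow> nat) \<Rightarrow> nat \<Rightarrow> nat" where
  "count_sq n i e p =
     card {a \<in> tuples i e p.
       in_int_col_span n (Amat n e (int p) a)
         (hadamard (col (Amat n e (int p) a) i) (col (Amat n e (int p) a) i))}"

end

theory Submission
  imports Defs
begin


definition polyF :: "(nat \<Rightarrow> rat) \<Rightarrow> bool" where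
  "polyF f \<longleftrightarrow> (\<exists>P. \<forall>p. prime p \<longrightarrow> f p = poly P (of_nat p))"

lemma polyF_const: "polyF (\<lambda>p. c)"
  unfolding polyF_def by (rule exI[of _ "[:c:]"]) simp

lemma polyF_pow: "polyF (\<lambda>p. of_nat p ^ j)"
  unfolding polyF_def by (rule exI[of _ "monom 1 j"]) (simp add: poly_monom)

lemma polyF_add: "polyF f \<Longrightarrow> polyF g \<Longrightarrow> polyF (\<lambda>p. f p + g p)"
  unfolding polyF_def by (metis poly_add)

lemma polyF_diff: "polyF f \<Longrightarrow> polyF g \<Longrightarrow> polyF (\<lambda>p. f p - g p)"
  unfolding polyF_def by (metis poly_diff)

lemma polyF_mult: "polyF f \<Longrightarrow> polyF g \<Longrightarrow> polyF (\<lambda>p. f p * g p)"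
  unfolding polyF_def by (metis poly_mult)

lemma polyF_sum: "finite A \<Longrightarrow> (\<And>x. x \<in> A \<Longrightarrow> polyF (f x)) \<Longrightarrow> polyF (\<lambda>p. \<Sum>x\<in>A. f x p)"
proof (induction A rule: finite_induct)
  case empty then show ?case using polyF_const[of 0] by simp
next
  case (insert x F) then show ?case using polyF_add[of "f x" "\<lambda>p. \<Sum>x\<in>F. f x p"] by simp
qed

lemma polyF_cong: "polyF f \<Longrightarrow> (\<And>p. prime p \<Longrightarrow> g p = f p) \<Longrightarrow> polyF g"
  unfolding polyF_def by metis



lemma card_res_class:
  fixes m :: int and N :: nat
  assumes "m > 0"
  shows "card {a\<in>{0..<m * int N}. a mod m = c mod m} = N"
proof -
  have "{a\<in>{0..<m * int N}. a mod m = c mod m} = (\<lambda>j. c mod m + m * j) ` {0..<int N}"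
  proof (rule set_eqI, rule iffI)
    fix a assume a: "a \<in> {a\<in>{0..<m * int N}. a mod m = c mod m}"
    hence a1: "0 \<le> a" "a < m * int N" "a mod m = c mod m" by auto
    have "a = c mod m + m * (a div m)" using a1(3) by (metis mult_div_mod_eq add.commute)
    moreover have "0 \<le> a div m" using a1 assms by (simp add: pos_imp_zdiv_nonneg_iff)
    moreover have "a div m < int N"
    proof -
      have "m * (a div m) \<le> a" using assms mult_div_mod_eq[of m a] pos_mod_sign[of m a] by linarith
      hence "m * (a div m) < m * int N" using a1 by linarith
      thus ?thesis using assms by (simp add: mult_less_cancel_left_pos)
    qed
    ultimately show "a \<in> (\<lambda>j. c mod m + m * j) ` {0..<int N}" by (intro image_eqI[of _ _ "a div m"]) auto
  next
    fix a assume "a \<in> (\<lambda>j. c mod m + m * j) ` {0..<int N}"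
    then obtain j where j: "0 \<le> j" "j < int N" "a = c mod m + m * j" by auto
    have c: "c mod m < m" "0 \<le> c mod m" using assms by auto
    have "j + 1 \<le> int N" using j by simp
    hence "m * (j + 1) \<le> m * int N" using assms by (simp add: mult_left_mono)
    hence "m * j + m \<le> m * int N" by (simp add: algebra_simps)
    moreover have "0 \<le> m * j" using assms j by simp
    moreover have "(c mod m + m * j) mod m = c mod m" by simp
    ultimately show "a \<in> {a\<in>{0..<m * int N}. a mod m = c mod m}" using j c by auto
  qed
  moreover have "inj_on (\<lambda>j. c mod m + m * j) {0..<int N}" using assms by (auto simp: inj_on_def)
  ultimately show ?thesis by (simp add: card_image)
qed



lemma card_lin:
  fixes p :: nat and y w :: int
  assumes p: "prime p" and hy: "int p ^ h dvd y" and hy2: "\<not> int p ^ Suc h dvd y"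
    and hm: "h \<le> m" "m \<le> h + k"
  shows "card {a\<in>{0..<int p ^ k}. int p ^ m dvd w - a * y} = (if int p ^ h dvd w then p ^ (k - (m - h)) else 0)"
proof (cases "int p ^ h dvd w")
  case False
  have E: "{a\<in>{0..<int p ^ k}. int p ^ m dvd w - a * y} = {}"
  proof (rule ccontr)
    assume "{a\<in>{0..<int p ^ k}. int p ^ m dvd w - a * y} \<noteq> {}"
    then obtain a where a: "int p ^ m dvd w - a * y" by auto
    have "int p ^ h dvd int p ^ m" using hm by (simp add: le_imp_power_dvd)
    hence "int p ^ h dvd w - a * y" using a dvd_trans by blast
    moreover have "int p ^ h dvd a * y" using hy by simp
    ultimately have "int p ^ h dvd w" using dvd_add[of _ "w - a*y" "a*y"] by simp
    thus False using False by simp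
  qed
  show ?thesis unfolding E using False by simp
next
  case True
  define P where "P = int p"
  have P0: "P \<noteq> 0" "P > 0" using p prime_gt_0_nat P_def by auto
  obtain u where u: "y = P ^ h * u" using hy P_def by (auto elim: dvdE)
  obtain w2 where w2: "w = P ^ h * w2" using True P_def by (auto elim: dvdE)
  have up: "\<not> P dvd u"
  proof
    assume "P dvd u" then obtain z where "u = P * z" by (auto elim: dvdE)
    hence "y = P ^ Suc h * z" using u by simp
    thus False using hy2 P_def by simp
  qed
  define d where "d = m - h"
  have pp: "prime P" using p P_def by simp
  have cop: "coprime u (P ^ d)" using prime_imp_power_coprime[OF pp up] .
  obtain s t where st: "s * u + t * P ^ d = 1"
    using bezout_int[of u "P ^ d"] cop by (auto simp: coprime_iff_gcd_eq_1)
  have mh: "P ^ m = P ^ h * P ^ d" using hm d_def by (simp add: power_add[symmetric])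
  have eq: "int p ^ m dvd w - a * y \<longleftrightarrow> a mod P ^ d = (w2 * s) mod P ^ d" for a
  proof -
    have "int p ^ m dvd w - a * y \<longleftrightarrow> P ^ h * P ^ d dvd P ^ h * (w2 - a * u)"
      using mh u w2 P_def by (simp add: algebra_simps)
    also have "\<dots> \<longleftrightarrow> P ^ d dvd (w2 - a * u)" using P0 by simp
    also have "\<dots> \<longleftrightarrow> P ^ d dvd a - w2 * s"
    proof
      assume "P ^ d dvd (w2 - a * u)"
      moreover have "(- s) * (w2 - a * u) + (a * t) * P ^ d = a * (s * u + t * P ^ d) - w2 * s"
        by (simp add: algebra_simps)
      hence "a - w2 * s = (- s) * (w2 - a * u) + (a * t) * P ^ d" using st by simp
      ultimately show "P ^ d dvd a - w2 * s" by simp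
    next
      assume "P ^ d dvd a - w2 * s"
      moreover have "(- u) * (a - w2 * s) + (w2 * t) * P ^ d = w2 * (s * u + t * P ^ d) - a * u"
        by (simp add: algebra_simps)
      hence "w2 - a * u = (- u) * (a - w2 * s) + (w2 * t) * P ^ d" using st by simp
      ultimately show "P ^ d dvd w2 - a * u" by simp
    qed
    also have "\<dots> \<longleftrightarrow> a mod P ^ d = (w2 * s) mod P ^ d" by (simp add: mod_eq_dvd_iff)
    finally show ?thesis .
  qed
  have kd: "int p ^ k = P ^ d * int (p ^ (k - d))" using hm d_def P_def
    by (simp add: power_add[symmetric])
  have "{a\<in>{0..<int p ^ k}. int p ^ m dvd w - a * y} = {a\<in>{0..<P ^ d * int (p ^ (k - d))}. a mod P ^ d = (w2 * s) mod P ^ d}"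
    using eq kd by simp
  also have "card \<dots> = p ^ (k - d)" using card_res_class[of "P ^ d" "p ^ (k-d)" "w2 * s"] P0 by simp
  finally show ?thesis using True d_def by simp
qed



definition Box :: "nat \<Rightarrow> nat \<Rightarrow> nat set \<Rightarrow> (nat \<Rightarrow> int) set" where
  "Box p k S = {f. (\<forall>s\<in>S. 0 \<le> f s \<and> f s < int p ^ k) \<and> (\<forall>s. s \<notin> S \<longrightarrow> f s = 0)}"

lemma Box_empty: "Box p k {} = {\<lambda>_. 0}"
  unfolding Box_def by auto

lemma Box_insert:
  assumes "x \<notin> S"
  shows "Box p k (insert x S) = (\<lambda>(b,f). f(x:=b)) ` ({0..<int p ^ k} \<times> Box p k S)"
proof (rule set_eqI, rule iffI)
  fix g assume g: "g \<in> Box p k (insert x S)"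
  hence "g(x:=0) \<in> Box p k S" using assms unfolding Box_def by auto
  moreover have "g x \<in> {0..<int p ^ k}" using g unfolding Box_def by auto
  moreover have "g = (g(x:=0))(x := g x)" by simp
  ultimately show "g \<in> (\<lambda>(b,f). f(x:=b)) ` ({0..<int p ^ k} \<times> Box p k S)"
    by (intro image_eqI[of _ _ "(g x, g(x:=0))"]) auto
next
  fix g assume "g \<in> (\<lambda>(b,f). f(x:=b)) ` ({0..<int p ^ k} \<times> Box p k S)"
  then obtain b f where "b \<in> {0..<int p ^ k}" "f \<in> Box p k S" "g = f(x:=b)" by auto
  thus "g \<in> Box p k (insert x S)" unfolding Box_def by auto
qed

lemma Box_insert_inj:
  assumes "x \<notin> S"
  shows "inj_on (\<lambda>(b,f). f(x:=b)) ({0..<int p ^ k} \<times> Box p k S)"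
proof (rule inj_onI, clarify)
  fix b f b' f' assume A: "f \<in> Box p k S" "f' \<in> Box p k S" "f(x := b) = f'(x := b')"
  have "b = b'" using fun_cong[OF A(3), of x] by simp
  moreover have "f = f'"
  proof
    fix s show "f s = f' s"
    proof (cases "s = x")
      case True thus ?thesis using A assms unfolding Box_def by auto
    next
      case False thus ?thesis using fun_cong[OF A(3), of s] by simp
    qed
  qed
  ultimately show "b = b' \<and> f = f'" by simp
qed

lemma sum_Box_insert:
  assumes "x \<notin> S"
  shows "(\<Sum>g\<in>Box p k (insert x S). F g) = (\<Sum>b\<in>{0..<int p ^ k}. \<Sum>f\<in>Box p k S. F (f(x:=b)))"
proof -
  have "(\<Sum>g\<in>Box p k (insert x S). F g) = (\<Sum>bf\<in>{0..<int p ^ k} \<times> Box p k S. F ((\<lambda>(b,f). f(x:=b)) bf))"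
    unfolding Box_insert[OF assms] by (rule sum.reindex[OF Box_insert_inj[OF assms], unfolded comp_def])
  also have "\<dots> = (\<Sum>b\<in>{0..<int p ^ k}. \<Sum>f\<in>Box p k S. F (f(x:=b)))"
    by (simp add: sum.cartesian_product case_prod_beta)
  finally show ?thesis .
qed

lemma finite_Box: "finite S \<Longrightarrow> finite (Box p k S)"
proof (induction S rule: finite_induct)
  case empty thus ?case by (simp add: Box_empty)
next
  case (insert x S) thus ?case by (simp add: Box_insert)
qed

lemma card_Box: "finite S \<Longrightarrow> card (Box p k S) = p ^ (k * card S)"
proof (induction S rule: finite_induct)
  case empty thus ?case by (simp add: Box_empty)
next
  case (insert x S)
  have "card (Box p k (insert x S)) = card ({0..<int p ^ k} \<times> Box p k S)"
    unfolding Box_insert[OF insert(2)] by (rule card_image[OF Box_insert_inj[OF insert(2)]])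
  also have "\<dots> = p ^ k * p ^ (k * card S)" using insert by (simp add: card_cartesian_product flip: of_nat_power)
  finally show ?case using insert by (simp add: power_add[symmetric])
qed

lemma card_filter_sum: "finite A \<Longrightarrow> card {x\<in>A. P x} = (\<Sum>x\<in>A. if P x then 1 else 0)"
proof -
  assume "finite A"
  have "{x\<in>A. P x} = A \<inter> Collect P" by auto
  thus ?thesis using \<open>finite A\<close> by (simp add: sum.If_cases)
qed

lemma box_update_sum:
  assumes "x \<notin> S" "finite S" "f \<in> Box p k S"
  shows "(\<Sum>s\<in>insert x S. (f(x:=b)) s * y s) = b * y x + (\<Sum>s\<in>S. f s * y s)"
proof -
  have "(\<Sum>s\<in>S. (f(x:=b)) s * y s) = (\<Sum>s\<in>S. f s * y s)"
    using assms(1) by (intro sum.cong) auto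
  thus ?thesis using assms by simp
qed

lemma dvd_diff_iff_left: "(a::int) dvd x \<Longrightarrow> (a dvd w - x \<longleftrightarrow> a dvd w)"
proof
  assume "a dvd x" "a dvd w - x"
  hence "a dvd (w - x) + x" by (rule dvd_add[rotated])
  thus "a dvd w" by simp
qed (rule dvd_diff)

lemma uniform:
  fixes p :: nat and y :: "nat \<Rightarrow> int"
  assumes p: "prime p" and S: "finite S" and hy: "\<forall>s\<in>S. int p ^ h dvd y s"
    and hm: "h \<le> m" "m \<le> h + k"
    and wit: "h < m \<Longrightarrow> \<exists>s\<in>S. \<not> int p ^ Suc h dvd y s"
  shows "card {f\<in>Box p k S. int p ^ m dvd w - (\<Sum>s\<in>S. f s * y s)} =
         (if int p ^ h dvd w then p ^ (k * card S - (m - h)) else 0)"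
proof (cases "h = m")
  case True
  have T: "int p ^ m dvd (\<Sum>s\<in>S. f s * y s)" for f using hy True by (auto intro!: dvd_sum)
  have "int p ^ m dvd w - (\<Sum>s\<in>S. f s * y s) \<longleftrightarrow> int p ^ m dvd w" for f
    using T[of f] by (rule dvd_diff_iff_left)
  hence E: "{f\<in>Box p k S. int p ^ m dvd w - (\<Sum>s\<in>S. f s * y s)} = (if int p ^ m dvd w then Box p k S else {})"
    by auto
  show ?thesis unfolding E using True card_Box[OF S] by simp
next
  case False
  hence hm': "h < m" using hm by simp
  obtain s0 where s0: "s0 \<in> S" "\<not> int p ^ Suc h dvd y s0" using wit[OF hm'] by blast
  define S0 where "S0 = S - {s0}"
  have S0: "s0 \<notin> S0" "finite S0" "S = insert s0 S0" using S s0 S0_def by auto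
  have cS: "card S = Suc (card S0)" using S0 by simp
  let ?T0 = "\<lambda>f. \<Sum>s\<in>S0. f s * y s"
  have cnt: "card {f\<in>Box p k S. int p ^ m dvd w - (\<Sum>s\<in>S. f s * y s)}
     = (\<Sum>g\<in>Box p k (insert s0 S0). if int p ^ m dvd w - (\<Sum>s\<in>insert s0 S0. g s * y s) then 1 else 0)"
    using card_filter_sum[OF finite_Box[OF S]] S0(3) by simp
  also have "\<dots> = (\<Sum>b\<in>{0..<int p ^ k}. \<Sum>f\<in>Box p k S0. if int p ^ m dvd w - (\<Sum>s\<in>insert s0 S0. (f(s0:=b)) s * y s) then 1 else 0)"
    by (rule sum_Box_insert[OF S0(1)])
  also have "\<dots> = (\<Sum>b\<in>{0..<int p ^ k}. \<Sum>f\<in>Box p k S0. if int p ^ m dvd (w - ?T0 f) - b * y s0 then 1 else 0)"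
    using box_update_sum[OF S0(1) S0(2)] by (intro sum.cong refl) (simp add: algebra_simps)
  also have "\<dots> = (\<Sum>f\<in>Box p k S0. \<Sum>b\<in>{0..<int p ^ k}. if int p ^ m dvd (w - ?T0 f) - b * y s0 then 1 else 0)"
    by (rule sum.swap)
  also have "\<dots> = (\<Sum>f\<in>Box p k S0. card {b\<in>{0..<int p ^ k}. int p ^ m dvd (w - ?T0 f) - b * y s0})"
    by (intro sum.cong refl, rule card_filter_sum[symmetric], simp)
  also have "\<dots> = (\<Sum>f\<in>Box p k S0. if int p ^ h dvd w then p ^ (k - (m - h)) else 0)"
  proof (intro sum.cong refl)
    fix f assume "f \<in> Box p k S0"
    have T0: "int p ^ h dvd ?T0 f" using hy S0 by (auto intro!: dvd_sum)
    have "int p ^ h dvd w - ?T0 f \<longleftrightarrow> int p ^ h dvd w" using T0 by (rule dvd_diff_iff_left)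
    thus "card {b\<in>{0..<int p ^ k}. int p ^ m dvd (w - ?T0 f) - b * y s0} = (if int p ^ h dvd w then p ^ (k - (m - h)) else 0)"
      using card_lin[OF p _ s0(2) hm, of "w - ?T0 f"] hy s0(1) by simp
  qed
  also have "\<dots> = (if int p ^ h dvd w then p ^ (k * card S - (m - h)) else 0)"
  proof -
    have "p ^ (k * card S0) * p ^ (k - (m - h)) = p ^ (k * card S - (m - h))"
    proof -
      have "k * card S0 + (k - (m - h)) = k * card S - (m - h)" using cS hm by simp
      thus ?thesis by (simp add: power_add[symmetric])
    qed
    thus ?thesis using card_Box[OF S0(2), of p k] by simp
  qed
  finally show ?thesis .
qed



definition G :: "nat \<Rightarrow> nat \<Rightarrow> nat \<Rightarrow> nat \<Rightarrow> nat" where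
  "G p N m D = card {b\<in>{0..<int p ^ N}. int p ^ m dvd b * (b - int p ^ D)}"

lemma card_ivl_pow: "card {0..<int p ^ N} = p ^ N"
  by (simp flip: of_nat_power)

lemma G_m0: "G p N 0 D = p ^ N"
proof -
  have "{b\<in>{0..<int p ^ N}. int p ^ 0 dvd b * (b - int p ^ D)} = {0..<int p ^ N}" by auto
  thus ?thesis unfolding G_def using card_ivl_pow by simp
qed

lemma small_dvd_zero:
  fixes x :: int
  assumes "x dvd b" "\<bar>b\<bar> < \<bar>x\<bar>" shows "b = 0"
proof (rule ccontr)
  assume "b \<noteq> 0"
  hence "\<bar>x\<bar> \<le> \<bar>b\<bar>" using dvd_imp_le_int assms(1) by blast
  thus False using assms(2) by simp
qed

lemma card_mult0:
  assumes p: "prime p"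
  shows "card {b\<in>{0..<int p ^ N}. int p ^ m dvd b} = (if m \<le> N then p ^ (N - m) else 1)"
proof (cases "m \<le> N")
  case True
  have P: "int p ^ m > 0" using p prime_gt_0_nat by simp
  have e: "int p ^ N = int p ^ m * int (p ^ (N - m))" using True by (simp add: power_add[symmetric])
  have "{b\<in>{0..<int p ^ N}. int p ^ m dvd b} = {b\<in>{0..<int p ^ m * int (p ^ (N - m))}. b mod int p ^ m = 0 mod int p ^ m}"
    using e by (auto simp: dvd_eq_mod_eq_0)
  thus ?thesis using card_res_class[OF P, of "p ^ (N-m)" 0] True by simp
next
  case False
  have p2: "int p \<ge> 2" using p prime_ge_2_nat by simp
  have lt: "int p ^ N < int p ^ m" using False p2 by (intro power_strict_increasing) auto
  have "{b\<in>{0..<int p ^ N}. int p ^ m dvd b} = {0}"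
  proof (rule set_eqI, rule iffI)
    fix b assume "b \<in> {b\<in>{0..<int p ^ N}. int p ^ m dvd b}"
    hence "int p ^ m dvd b" "\<bar>b\<bar> < \<bar>int p ^ m\<bar>" using lt by auto
    thus "b \<in> {0}" using small_dvd_zero by auto
  next
    fix b assume "b \<in> {0::int}"
    thus "b \<in> {b\<in>{0..<int p ^ N}. int p ^ m dvd b}" using p2 by simp
  qed
  thus ?thesis using False by simp
qed

lemma card_mult1:
  assumes p: "prime p" and m: "m \<ge> 1"
  shows "card {b\<in>{0..<int p ^ N}. int p ^ m dvd b - 1} = (if m \<le> N then p ^ (N - m) else if N \<ge> 1 then 1 else 0)"
proof (cases "m \<le> N")
  case True
  have P: "int p ^ m > 0" using p prime_gt_0_nat by simp
  have e: "int p ^ N = int p ^ m * int (p ^ (N - m))" using True by (simp add: power_add[symmetric])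
  have "{b\<in>{0..<int p ^ N}. int p ^ m dvd b - 1} = {b\<in>{0..<int p ^ m * int (p ^ (N - m))}. b mod int p ^ m = 1 mod int p ^ m}"
    using e by (auto simp: mod_eq_dvd_iff)
  thus ?thesis using card_res_class[OF P, of "p ^ (N-m)" 1] True by simp
next
  case False
  have p2: "int p \<ge> 2" using p prime_ge_2_nat by simp
  have lt: "int p ^ N < int p ^ m" using False p2 by (intro power_strict_increasing) auto
  have A: "int p \<le> int p ^ m" using power_increasing[of 1 m "int p"] m p2 by simp
  have pm2: "int p ^ m \<ge> 2" using A p2 by linarith
  have "{b\<in>{0..<int p ^ N}. int p ^ m dvd b - 1} = (if N \<ge> 1 then {1} else {})"
  proof (rule set_eqI, rule iffI)
    fix b assume b: "b \<in> {b\<in>{0..<int p ^ N}. int p ^ m dvd b - 1}"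
    hence "int p ^ m dvd b - 1" "\<bar>b - 1\<bar> < \<bar>int p ^ m\<bar>" using lt pm2 by auto
    hence "b - 1 = 0" using small_dvd_zero[of "int p ^ m" "b - 1"] by blast
    hence "b = 1" by simp
    moreover have "N \<ge> 1" using b \<open>b = 1\<close> by (cases N) auto
    ultimately show "b \<in> (if N \<ge> 1 then {1} else {})" by simp
  next
    fix b :: int assume "b \<in> (if N \<ge> 1 then {1} else {})"
    hence "b = 1" "N \<ge> 1" by (auto split: if_splits)
    moreover have "1 < int p ^ N" using \<open>N \<ge> 1\<close> p2 by (intro one_less_power) auto
    ultimately show "b \<in> {b\<in>{0..<int p ^ N}. int p ^ m dvd b - 1}" by simp
  qed
  thus ?thesis using False by simp
qed



lemma pm_split:
  fixes P x y :: int
  assumes P: "prime P" and c: "coprime x y" and d: "P ^ m dvd x * y"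
  shows "P ^ m dvd x \<or> P ^ m dvd y"
proof (cases "P dvd x")
  case True
  have nu: "\<not> is_unit P" using P not_prime_unit by blast
  have "\<not> P dvd y"
  proof
    assume "P dvd y"
    hence "\<not> coprime x y" using True nu by (intro not_coprimeI)
    thus False using c by simp
  qed
  hence "coprime y (P ^ m)" by (rule prime_imp_power_coprime[OF P])
  hence "coprime (P ^ m) y" by (simp only: coprime_commute)
  hence "P ^ m dvd x" using d coprime_dvd_mult_left_iff by blast
  thus ?thesis by simp
next
  case False
  hence "coprime x (P ^ m)" by (rule prime_imp_power_coprime[OF P])
  hence "coprime (P ^ m) x" by (simp only: coprime_commute)
  hence "P ^ m dvd y" using d coprime_dvd_mult_right_iff by blast
  thus ?thesis by simp
qed

lemma coprime_minus1: "coprime (b::int) (b - 1)"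
proof (rule coprimeI)
  fix c assume "c dvd b" "c dvd b - 1"
  hence "c dvd b - (b - 1)" by (rule dvd_diff)
  thus "is_unit c" by simp
qed

lemma G_D0:
  assumes p: "prime p" and m: "m \<ge> 1"
  shows "G p N m 0 = (if m \<le> N then p ^ (N - m) else 1) + (if m \<le> N then p ^ (N - m) else if N \<ge> 1 then 1 else 0)"
proof -
  define A where "A = {b\<in>{0..<int p ^ N}. int p ^ m dvd b}"
  define B where "B = {b\<in>{0..<int p ^ N}. int p ^ m dvd b - 1}"
  have P: "prime (int p)" using p by simp
  have E: "{b\<in>{0..<int p ^ N}. int p ^ m dvd b * (b - int p ^ 0)} = A \<union> B"
    unfolding A_def B_def using pm_split[OF P coprime_minus1] by auto
  moreover have "A \<inter> B = {}"
  proof (rule ccontr)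
    assume "A \<inter> B \<noteq> {}"
    then obtain b where "int p ^ m dvd b" "int p ^ m dvd b - 1" unfolding A_def B_def by auto
    hence "int p ^ m dvd b - (b - 1)" by (rule dvd_diff)
    hence "int p ^ m dvd 1" by simp
    moreover have "int p dvd int p ^ m" using m by (intro dvd_power) auto
    ultimately have "int p dvd 1" by (rule dvd_trans[rotated])
    thus False using P not_prime_unit by blast
  qed
  moreover have "finite A" "finite B" unfolding A_def B_def by (rule finite_subset[of _ "{0..<int p ^ N}"], auto)+
  ultimately have "G p N m 0 = card A + card B" unfolding G_def E
    by (simp add: card_Un_disjoint)
  thus ?thesis using card_mult0[OF p] card_mult1[OF p m] A_def B_def by simp
qed



lemma dvd_cancel_sq:
  fixes P X :: int
  assumes "P \<noteq> 0"
  shows "P ^ m dvd P ^ 2 * X \<longleftrightarrow> P ^ (m - 2) dvd X"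
proof (cases "m \<ge> 2")
  case True
  hence "m = 2 + (m - 2)" by simp
  hence "P ^ m = P ^ 2 * P ^ (m - 2)" by (metis power_add)
  thus ?thesis using assms by simp
next
  case False
  hence "m - 2 = 0" by simp
  moreover have "P ^ m dvd P ^ 2 * X" using False
    by (intro dvd_mult2 le_imp_power_dvd) simp
  ultimately show ?thesis by simp
qed

lemma G_Suc_N0:
  assumes p: "prime p"
  shows "G p 0 m (Suc D) = 1"
proof -
  have "{b\<in>{0..<int p ^ 0}. int p ^ m dvd b * (b - int p ^ Suc D)} = {0}" by auto
  thus ?thesis unfolding G_def by simp
qed

lemma G_Suc:
  assumes p: "prime p" and N: "N \<ge> 1" and m: "m \<ge> 1"
  shows "G p N m (Suc D) = G p (N - 1) (m - 2) D"
proof -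
  define P where "P = int p"
  have P: "prime P" "P > 0" using p prime_gt_0_nat P_def by auto
  have key: "P ^ m dvd (P * c) * (P * c - P ^ Suc D) \<longleftrightarrow> P ^ (m - 2) dvd c * (c - P ^ D)" for c
  proof -
    have eq: "(P * c) * (P * c - P ^ Suc D) = P ^ 2 * (c * (c - P ^ D))" by (simp add: algebra_simps power2_eq_square)
    have "P \<noteq> 0" using P by simp
    show ?thesis unfolding eq by (rule dvd_cancel_sq[OF \<open>P \<noteq> 0\<close>])
  qed
  have PN: "P ^ N = P * P ^ (N - 1)" using N by (simp add: power_Suc[symmetric])
  have E: "{b\<in>{0..<P ^ N}. P ^ m dvd b * (b - P ^ Suc D)} =
        (\<lambda>c. P * c) ` {c\<in>{0..<P ^ (N - 1)}. P ^ (m - 2) dvd c * (c - P ^ D)}"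
  proof (rule set_eqI, rule iffI)
    fix b assume b: "b \<in> {b\<in>{0..<P ^ N}. P ^ m dvd b * (b - P ^ Suc D)}"
    have "P dvd b"
    proof -
      have "P dvd P ^ m" using m by (intro dvd_power) auto
      hence "P dvd b * (b - P ^ Suc D)" using b dvd_trans by blast
      hence "P dvd b \<or> P dvd b - P ^ Suc D" using P(1) prime_dvd_mult_iff by blast
      moreover have "P dvd P ^ Suc D" by simp
      ultimately show ?thesis using dvd_add[of P "b - P ^ Suc D" "P ^ Suc D"] by auto
    qed
    then obtain c where c: "b = P * c" by (auto elim: dvdE)
    have "0 \<le> c" using b c P by (simp add: zero_le_mult_iff)
    moreover have "c < P ^ (N - 1)" using b c P PN by simp
    moreover have "P ^ (m - 2) dvd c * (c - P ^ D)" using b c key by simp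
    ultimately show "b \<in> (\<lambda>c. P * c) ` {c\<in>{0..<P ^ (N - 1)}. P ^ (m - 2) dvd c * (c - P ^ D)}"
      using c by auto
  next
    fix b assume "b \<in> (\<lambda>c. P * c) ` {c\<in>{0..<P ^ (N - 1)}. P ^ (m - 2) dvd c * (c - P ^ D)}"
    then obtain c where c: "b = P * c" "0 \<le> c" "c < P ^ (N - 1)" "P ^ (m - 2) dvd c * (c - P ^ D)" by auto
    show "b \<in> {b\<in>{0..<P ^ N}. P ^ m dvd b * (b - P ^ Suc D)}" using c key P PN by simp
  qed
  have inj: "inj_on (\<lambda>c. P * c) A" for A using P by (auto simp: inj_on_def)
  show ?thesis unfolding G_def P_def[symmetric] E card_image[OF inj] ..
qed



lemma polyF_natpow: "polyF (\<lambda>p. of_nat (p ^ j))"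
  using polyF_pow[of j] by simp

lemma G_poly: "polyF (\<lambda>p. of_nat (G p N m D))"
proof (induction D arbitrary: N m)
  case 0
  show ?case
  proof (cases "m = 0")
    case True thus ?thesis using polyF_natpow[of N] by (simp add: G_m0)
  next
    case False
    hence m: "m \<ge> 1" by simp
    define c where "c = (if m \<le> N then 0 else 1 + (if N \<ge> 1 then 1 else 0 :: rat))"
    define a where "a = (if m \<le> N then 2 else 0 :: rat)"
    have "polyF (\<lambda>p. c + a * of_nat (p ^ (N - m)))"
      by (intro polyF_add polyF_const polyF_mult polyF_natpow)
    thus ?thesis
    proof (rule polyF_cong)
      fix p :: nat assume p: "prime p"
      show "of_nat (G p N m 0) = c + a * of_nat (p ^ (N - m))"
        unfolding G_D0[OF p m] c_def a_def by auto
    qed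
  qed
next
  case (Suc D)
  show ?case
  proof (cases "m = 0")
    case True thus ?thesis using polyF_natpow[of N] by (simp add: G_m0)
  next
    case False
    hence m: "m \<ge> 1" by simp
    show ?thesis
    proof (cases "N = 0")
      case True
      thus ?thesis by (rule_tac polyF_cong[OF polyF_const[of 1]]) (simp add: G_Suc_N0)
    next
      case False
      show ?thesis
        by (rule polyF_cong[OF Suc.IH[of "N-1" "m-2"]]) (use False m in \<open>simp add: G_Suc\<close>)
    qed
  qed
qed



definition Rv :: "nat \<Rightarrow> nat \<Rightarrow> (nat \<Rightarrow> int) \<Rightarrow> nat \<Rightarrow> (nat \<Rightarrow> int) \<Rightarrow> int" where
  "Rv p i env j row = int p ^ 2 * (row i)^2 - int p * (\<Sum>s\<in>{Suc j..i}. row s * env s)"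

fun good :: "nat \<Rightarrow> nat \<Rightarrow> (nat \<Rightarrow> nat) \<Rightarrow> nat \<Rightarrow> (nat \<Rightarrow> int) \<Rightarrow> (nat \<Rightarrow> nat \<Rightarrow> int) \<Rightarrow> bool" where
  "good p i e 0 env a = True"
| "good p i e (Suc r) env a =
     (int p ^ e (Suc r) dvd Rv p i env (Suc r) (a (Suc r)) \<and>
      good p i e r (env(Suc r := Rv p i env (Suc r) (a (Suc r)) div int p ^ e (Suc r))) a)"

fun cnt :: "nat \<Rightarrow> nat \<Rightarrow> (nat \<Rightarrow> nat) \<Rightarrow> nat \<Rightarrow> (nat \<Rightarrow> int) \<Rightarrow> nat" where
  "cnt p i e 0 env = 1"
| "cnt p i e (Suc r) env =
     (\<Sum>row\<in>Box p (e (Suc r) - 1) {Suc (Suc r)..i}.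
        if int p ^ e (Suc r) dvd Rv p i env (Suc r) row
        then cnt p i e r (env(Suc r := Rv p i env (Suc r) row div int p ^ e (Suc r))) else 0)"

definition Tup :: "nat \<Rightarrow> nat \<Rightarrow> (nat \<Rightarrow> nat) \<Rightarrow> nat \<Rightarrow> (nat \<Rightarrow> nat \<Rightarrow> int) set" where
  "Tup p i e r = {a. \<forall>j s. (1 \<le> j \<and> j \<le> r \<and> j < s \<and> s \<le> i \<longrightarrow> 0 \<le> a j s \<and> a j s < int p ^ (e j - 1)) \<and>
                      (\<not> (1 \<le> j \<and> j \<le> r \<and> j < s \<and> s \<le> i) \<longrightarrow> a j s = 0)}"

lemma good_local:
  "(\<And>j. 1 \<le> j \<Longrightarrow> j \<le> r \<Longrightarrow> a j = a' j) \<Longrightarrow> good p i e r env a = good p i e r env a'"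
proof (induction r arbitrary: env)
  case 0 thus ?case by simp
next
  case (Suc r)
  have "a (Suc r) = a' (Suc r)" using Suc.prems by simp
  moreover have "good p i e r env' a = good p i e r env' a'" for env'
    using Suc.prems by (intro Suc.IH) auto
  ultimately show ?case by simp
qed

lemma Tup0: "Tup p i e 0 = {\<lambda>_ _. 0}"
  unfolding Tup_def by (auto intro!: ext)

lemma Tup_Suc:
  "Tup p i e (Suc r) = (\<lambda>(row, a). a(Suc r := row)) ` (Box p (e (Suc r) - 1) {Suc (Suc r)..i} \<times> Tup p i e r)"
proof (rule set_eqI, rule iffI)
  fix a assume a: "a \<in> Tup p i e (Suc r)"
  have "a (Suc r) \<in> Box p (e (Suc r) - 1) {Suc (Suc r)..i}"
    using a unfolding Tup_def Box_def by auto
  moreover have "a(Suc r := (\<lambda>_. 0)) \<in> Tup p i e r"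
    using a unfolding Tup_def by auto
  moreover have "a = (a(Suc r := (\<lambda>_. 0)))(Suc r := a (Suc r))" by simp
  ultimately show "a \<in> (\<lambda>(row, a). a(Suc r := row)) ` (Box p (e (Suc r) - 1) {Suc (Suc r)..i} \<times> Tup p i e r)"
    by (intro image_eqI[of _ _ "(a (Suc r), a(Suc r := (\<lambda>_. 0)))"]) auto
next
  fix a assume "a \<in> (\<lambda>(row, a). a(Suc r := row)) ` (Box p (e (Suc r) - 1) {Suc (Suc r)..i} \<times> Tup p i e r)"
  then obtain row b where rb: "row \<in> Box p (e (Suc r) - 1) {Suc (Suc r)..i}" "b \<in> Tup p i e r" "a = b(Suc r := row)"
    by auto
  show "a \<in> Tup p i e (Suc r)" unfolding Tup_def
  proof (intro CollectI allI)
    fix j s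
    show "(1 \<le> j \<and> j \<le> Suc r \<and> j < s \<and> s \<le> i \<longrightarrow> 0 \<le> a j s \<and> a j s < int p ^ (e j - 1)) \<and>
          (\<not> (1 \<le> j \<and> j \<le> Suc r \<and> j < s \<and> s \<le> i) \<longrightarrow> a j s = 0)"
    proof (cases "j = Suc r")
      case True thus ?thesis using rb unfolding Box_def by auto
    next
      case False thus ?thesis using rb unfolding Tup_def by auto
    qed
  qed
qed

lemma Tup_Suc_inj:
  "inj_on (\<lambda>(row, a). a(Suc r := row)) (Box p (e (Suc r) - 1) {Suc (Suc r)..i} \<times> Tup p i e r)"
proof (rule inj_onI, clarify)
  fix row a row' a'
  assume A: "a \<in> Tup p i e r" "a' \<in> Tup p i e r" "a(Suc r := row) = a'(Suc r := row')"
  have "row = row'" using fun_cong[OF A(3), of "Suc r"] by simp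
  moreover have "a = a'"
  proof
    fix j show "a j = a' j"
    proof (cases "j = Suc r")
      case True thus ?thesis using A unfolding Tup_def by (auto intro!: ext)
    next
      case False thus ?thesis using fun_cong[OF A(3), of j] by simp
    qed
  qed
  ultimately show "row = row' \<and> a = a'" by simp
qed

lemma finite_Tup: "finite (Tup p i e r)"
proof (induction r)
  case 0 thus ?case by (simp add: Tup0)
next
  case (Suc r) thus ?case unfolding Tup_Suc by (intro finite_imageI finite_cartesian_product finite_Box) auto
qed

lemma card_good: "card {a\<in>Tup p i e r. good p i e r env a} = cnt p i e r env"
proof (induction r arbitrary: env)
  case 0 thus ?case by (simp add: Tup0)
next
  case (Suc r)
  let ?B = "Box p (e (Suc r) - 1) {Suc (Suc r)..i}"
  let ?f = "\<lambda>(row, a). a(Suc r := row)"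
  let ?dv = "\<lambda>row. int p ^ e (Suc r) dvd Rv p i env (Suc r) row"
  let ?env = "\<lambda>row. env(Suc r := Rv p i env (Suc r) row div int p ^ e (Suc r))"
  have fB: "finite ?B" by (rule finite_Box) simp
  have "card {a\<in>Tup p i e (Suc r). good p i e (Suc r) env a} =
        (\<Sum>a\<in>Tup p i e (Suc r). if good p i e (Suc r) env a then 1 else 0)"
    by (rule card_filter_sum[OF finite_Tup])
  also have "\<dots> = (\<Sum>x\<in>?B \<times> Tup p i e r. if good p i e (Suc r) env (?f x) then 1 else 0)"
    unfolding Tup_Suc by (subst sum.reindex[OF Tup_Suc_inj]) (simp add: comp_def)
  also have "\<dots> = (\<Sum>row\<in>?B. \<Sum>a\<in>Tup p i e r. if good p i e (Suc r) env (a(Suc r := row)) then 1 else 0)"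
    by (simp add: sum.cartesian_product case_prod_beta)
  also have "\<dots> = (\<Sum>row\<in>?B. if ?dv row then cnt p i e r (?env row) else 0)"
  proof (intro sum.cong refl)
    fix row assume "row \<in> ?B"
    have g: "good p i e r env' (a(Suc r := row)) = good p i e r env' a" for env' a
      by (rule good_local) auto
    have "(\<Sum>a\<in>Tup p i e r. if good p i e (Suc r) env (a(Suc r := row)) then 1 else 0) =
          (\<Sum>a\<in>Tup p i e r. if ?dv row then (if good p i e r (?env row) a then 1 else 0) else 0)"
      using g by (intro sum.cong refl) simp
    also have "\<dots> = (if ?dv row then card {a\<in>Tup p i e r. good p i e r (?env row) a} else 0)"
      by (simp add: card_filter_sum[OF finite_Tup])
    also have "\<dots> = (if ?dv row then cnt p i e r (?env row) else 0)" unfolding Suc.IH ..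
    finally show "(\<Sum>a\<in>Tup p i e r. if good p i e (Suc r) env (a(Suc r := row)) then 1 else 0) =
          (if ?dv row then cnt p i e r (?env row) else 0)" .
  qed
  finally show ?case by simp
qed



lemma Rv_cong: "(\<And>s. s \<in> {Suc j..i} \<Longrightarrow> x s = y s) \<Longrightarrow> Rv p i x j row = Rv p i y j row"
proof -
  assume h: "\<And>s. s \<in> {Suc j..i} \<Longrightarrow> x s = y s"
  have "(\<Sum>s\<in>{Suc j..i}. row s * x s) = (\<Sum>s\<in>{Suc j..i}. row s * y s)"
    by (rule sum.cong) (use h in auto)
  thus ?thesis unfolding Rv_def by simp
qed

lemma good_iff:
  assumes p: "p > 0" and r: "r \<le> i"
  shows "good p i e r env a \<longleftrightarrow>
    (\<exists>x. (\<forall>s\<in>{Suc r..i}. x s = env s) \<and> (\<forall>j\<in>{1..r}. int p ^ e j * x j = Rv p i x j (a j)))"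
  using r
proof (induction r arbitrary: env)
  case 0 thus ?case by auto
next
  case (Suc r)
  define R where "R = Rv p i env (Suc r) (a (Suc r))"
  define env' where "env' = env(Suc r := R div int p ^ e (Suc r))"
  have pe: "int p ^ e (Suc r) \<noteq> 0" using p by simp
  have IH: "good p i e r env' a \<longleftrightarrow>
    (\<exists>x. (\<forall>s\<in>{Suc r..i}. x s = env' s) \<and> (\<forall>j\<in>{1..r}. int p ^ e j * x j = Rv p i x j (a j)))"
    using Suc.IH Suc.prems by simp
  have gs: "good p i e (Suc r) env a \<longleftrightarrow> int p ^ e (Suc r) dvd R \<and> good p i e r env' a"
    unfolding R_def env'_def by simp
  show ?case
  proof
    assume "good p i e (Suc r) env a"
    then obtain x where d: "int p ^ e (Suc r) dvd R" and x1: "\<forall>s\<in>{Suc r..i}. x s = env' s"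
      and x2: "\<forall>j\<in>{1..r}. int p ^ e j * x j = Rv p i x j (a j)" using gs IH by blast
    have xe: "\<forall>s\<in>{Suc (Suc r)..i}. x s = env s" using x1 unfolding env'_def by auto
    have "x (Suc r) = R div int p ^ e (Suc r)" using x1 Suc.prems unfolding env'_def by auto
    hence "int p ^ e (Suc r) * x (Suc r) = R" using d by simp
    also have "R = Rv p i x (Suc r) (a (Suc r))" unfolding R_def by (rule Rv_cong) (use xe in auto)
    finally have "int p ^ e (Suc r) * x (Suc r) = Rv p i x (Suc r) (a (Suc r))" .
    hence "\<forall>j\<in>{1..Suc r}. int p ^ e j * x j = Rv p i x j (a j)" using x2
      by (auto simp: le_Suc_eq)
    thus "\<exists>x. (\<forall>s\<in>{Suc (Suc r)..i}. x s = env s) \<and> (\<forall>j\<in>{1..Suc r}. int p ^ e j * x j = Rv p i x j (a j))"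
      using xe by blast
  next
    assume "\<exists>x. (\<forall>s\<in>{Suc (Suc r)..i}. x s = env s) \<and> (\<forall>j\<in>{1..Suc r}. int p ^ e j * x j = Rv p i x j (a j))"
    then obtain x where xe: "\<forall>s\<in>{Suc (Suc r)..i}. x s = env s"
      and x2: "\<forall>j\<in>{1..Suc r}. int p ^ e j * x j = Rv p i x j (a j)" by blast
    have "R = Rv p i x (Suc r) (a (Suc r))" unfolding R_def by (rule Rv_cong) (use xe in auto)
    also have "\<dots> = int p ^ e (Suc r) * x (Suc r)" using x2 by auto
    finally have R: "R = int p ^ e (Suc r) * x (Suc r)" .
    hence d: "int p ^ e (Suc r) dvd R" by simp
    have "R div int p ^ e (Suc r) = x (Suc r)" using R pe by simp
    hence "\<forall>s\<in>{Suc r..i}. x s = env' s" using xe unfolding env'_def by (auto simp: Suc_le_eq le_less)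
    moreover have "\<forall>j\<in>{1..r}. int p ^ e j * x j = Rv p i x j (a j)" using x2 by auto
    ultimately have "good p i e r env' a" using IH by blast
    thus "good p i e (Suc r) env a" using gs d by simp
  qed
qed



lemma row_sum:
  assumes "1 \<le> r" "r < n"
  shows "(\<Sum>s=1..n. Amat n e P a r s * x s) = P ^ e r * x r + P * (\<Sum>s\<in>{Suc r..n-1}. a r s * x s) + x n"
proof -
  have dec: "Amat n e P a r s * x s = (if s = n then x n else 0) + (if s = r then P ^ e r * x r else 0)
      + (if r < s \<and> s < n then P * a r s * x s else 0)" if "s \<in> {1..n}" for s
    using that assms unfolding Amat_def by auto
  have "(\<Sum>s=1..n. Amat n e P a r s * x s) = (\<Sum>s=1..n. (if s = n then x n else 0) + (if s = r then P ^ e r * x r else 0)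
      + (if r < s \<and> s < n then P * a r s * x s else 0))" using dec by (rule sum.cong[OF refl])
  also have "\<dots> = (\<Sum>s=1..n. (if s = n then x n else 0)) + (\<Sum>s=1..n. (if s = r then P ^ e r * x r else 0))
      + (\<Sum>s=1..n. (if r < s \<and> s < n then P * a r s * x s else 0))" by (simp add: sum.distrib)
  also have "(\<Sum>s=1..n. (if s = n then x n else 0)) = x n" using assms by simp
  also have "(\<Sum>s=1..n. (if s = r then P ^ e r * x r else 0)) = P ^ e r * x r" using assms by simp
  also have "(\<Sum>s=1..n. (if r < s \<and> s < n then P * a r s * x s else 0)) = (\<Sum>s\<in>{s\<in>{1..n}. r < s \<and> s < n}. P * a r s * x s)"
    by (rule sum.inter_filter[symmetric]) simp
  also have "{s\<in>{1..n}. r < s \<and> s < n} = {Suc r..n-1}" using assms by auto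
  also have "(\<Sum>s\<in>{Suc r..n-1}. P * a r s * x s) = P * (\<Sum>s\<in>{Suc r..n-1}. a r s * x s)"
    by (simp add: sum_distrib_left mult.assoc)
  finally show ?thesis by simp
qed

lemma row_sum_n:
  shows "(\<Sum>s=1..n. Amat n e P a n s * x s) = (if n \<ge> 1 then x n else 0)"
proof -
  have "(\<Sum>s=1..n. Amat n e P a n s * x s) = (\<Sum>s=1..n. if s = n then x n else 0)"
    by (rule sum.cong) (auto simp: Amat_def)
  thus ?thesis by simp
qed

lemma tuples_Tup: "tuples i e p = Tup p i e (i - 1)"
proof -
  have e: "(1 \<le> j \<and> j < s \<and> s \<le> i) \<longleftrightarrow> (1 \<le> j \<and> j \<le> i - 1 \<and> j < s \<and> s \<le> i)" for j s :: nat by arith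
  show ?thesis unfolding tuples_def Tup_def by (simp only: e all_conj_distrib)
qed



lemma span_iff:
  assumes n: "n \<ge> 2" "1 \<le> i" "i \<le> n - 1" and p: "p > 0" and a: "a \<in> Tup p i e (i - 1)"
  shows "in_int_col_span n (Amat n e (int p) a) (hadamard (col (Amat n e (int p) a) i) (col (Amat n e (int p) a) i))
     \<longleftrightarrow> (\<exists>x. x i = int p ^ e i \<and> (\<forall>j\<in>{1..i-1}. int p ^ e j * x j = Rv p i x j (a j)))"
proof -
  define P where "P = int p"
  have ni: "i < n" using n by arith
  define A where "A = Amat n e P a"
  have az: "a j s = 0" if "\<not> (1 \<le> j \<and> j \<le> i - 1 \<and> j < s \<and> s \<le> i)" for j s
    using a that unfolding Tup_def by auto
  have inner: "(\<Sum>s\<in>{Suc r..n-1}. a r s * x s) = (if r < i then (\<Sum>s\<in>{Suc r..i}. a r s * x s) else 0)"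
    if "1 \<le> r" for r and x :: "nat \<Rightarrow> int"
  proof (cases "r < i")
    case True
    have "(\<Sum>s\<in>{Suc r..n-1}. a r s * x s) = (\<Sum>s\<in>{Suc r..i}. a r s * x s)"
      by (rule sum.mono_neutral_right) (use n az in auto)
    thus ?thesis using True by simp
  next
    case False
    thus ?thesis using az by simp
  qed
  have Ai: "A r i = (if r = i then P ^ e i else if r < i then P * a r i else 0)" for r
    using n unfolding A_def Amat_def by auto
  have w: "hadamard (col A i) (col A i) r = (A r i)^2" for r
    unfolding hadamard_def col_def by (simp add: power2_eq_square)
  have RS: "(\<Sum>s=1..n. A r s * x s) = P ^ e r * x r + P * (if r < i then (\<Sum>s\<in>{Suc r..i}. a r s * x s) else 0) + x n"
    if "1 \<le> r" "r < n" for r x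
    using row_sum[OF that, of e P a x] inner[OF that(1), of x] unfolding A_def by simp
  have RSn: "(\<Sum>s=1..n. A n s * x s) = x n" for x using row_sum_n[of n e P a x] n unfolding A_def by simp
  have Rv_eq: "Rv p i x j (a j) = P ^ 2 * (a j i)^2 - P * (\<Sum>s\<in>{Suc j..i}. a j s * x s)" for x j
    unfolding Rv_def P_def by simp
  have Pne: "P ^ e i \<noteq> 0" if "p > 0" using that P_def by simp
  show ?thesis
    unfolding A_def[symmetric] P_def[symmetric] in_int_col_span_def
  proof
    assume "\<exists>x. \<forall>r\<in>{1..n}. hadamard (col A i) (col A i) r = (\<Sum>s = 1..n. A r s * x s)"
    then obtain x where H: "\<And>r. r \<in> {1..n} \<Longrightarrow> (A r i)^2 = (\<Sum>s = 1..n. A r s * x s)" using w by metis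
    have xn: "x n = 0" using H[of n] RSn[of x] Ai[of n] n ni by simp
    have "(P ^ e i)^2 = P ^ e i * x i" using H[of i] RS[of i x] Ai[of i] n xn by simp
    moreover have "P ^ e i \<noteq> 0" using p P_def by simp
    ultimately have xi: "x i = P ^ e i" by (metis mult_cancel_left power2_eq_square)
    have "\<forall>j\<in>{1..i-1}. P ^ e j * x j = Rv p i x j (a j)"
    proof
      fix j assume j: "j \<in> {1..i-1}"
      hence jj: "j < i" "j < n" "j \<le> n" "1 \<le> j" using n ni by auto
      hence "(P * a j i)^2 = P ^ e j * x j + P * (\<Sum>s\<in>{Suc j..i}. a j s * x s)"
        using H[of j] RS[of j x] Ai[of j] xn by simp
      thus "P ^ e j * x j = Rv p i x j (a j)" unfolding Rv_eq by (simp add: power_mult_distrib)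
    qed
    thus "\<exists>x. x i = P ^ e i \<and> (\<forall>j\<in>{1..i-1}. P ^ e j * x j = Rv p i x j (a j))" using xi by blast
  next
    assume "\<exists>x. x i = P ^ e i \<and> (\<forall>j\<in>{1..i-1}. P ^ e j * x j = Rv p i x j (a j))"
    then obtain x where xi: "x i = P ^ e i" and xe: "\<And>j. j \<in> {1..i-1} \<Longrightarrow> P ^ e j * x j = Rv p i x j (a j)" by blast
    define x' where "x' = (\<lambda>s. if s \<le> i then x s else 0)"
    have x'n: "x' n = 0" using n unfolding x'_def by simp
    have sx: "(\<Sum>s\<in>{Suc j..i}. a j s * x' s) = (\<Sum>s\<in>{Suc j..i}. a j s * x s)" for j
      unfolding x'_def by (rule sum.cong) auto
    have "\<forall>r\<in>{1..n}. hadamard (col A i) (col A i) r = (\<Sum>s = 1..n. A r s * x' s)"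
    proof
      fix r assume r: "r \<in> {1..n}"
      have "r \<le> n" using r by simp
      hence "r = n \<or> (i < r \<and> r < n) \<or> r = i \<or> r < i" by arith
      then consider "r = n" | "i < r" "r < n" | "r = i" | "r < i" by blast
      thus "hadamard (col A i) (col A i) r = (\<Sum>s = 1..n. A r s * x' s)"
      proof cases
        case 1 thus ?thesis using RSn[of x'] x'n w Ai ni by simp
      next
        case 2 thus ?thesis using RS[of r x'] x'n w Ai r unfolding x'_def by simp
      next
        case 3 thus ?thesis using RS[of r x'] x'n w Ai r n xi unfolding x'_def
          by (simp add: power2_eq_square)
      next
        case 4
        have "P ^ e r * x r = P ^ 2 * (a r i)^2 - P * (\<Sum>s\<in>{Suc r..i}. a r s * x s)"
          using xe[of r] r 4 Rv_eq by simp
        moreover have "x' r = x r" using 4 unfolding x'_def by simp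
        moreover have "r < n" using 4 ni by simp
        ultimately show ?thesis using RS[of r x'] x'n w Ai r 4 sx
          by (simp add: power_mult_distrib)
      qed
    qed
    thus "\<exists>x. \<forall>r\<in>{1..n}. hadamard (col A i) (col A i) r = (\<Sum>s = 1..n. A r s * x s)" by blast
  qed
qed



definition st_ok :: "nat \<Rightarrow> nat set \<Rightarrow> nat \<Rightarrow> nat \<Rightarrow> (nat \<Rightarrow> int) \<Rightarrow> bool" where
  "st_ok p S c g env \<longleftrightarrow> g \<le> c \<and> (\<forall>s\<in>S. int p ^ g dvd env s) \<and> (g < c \<longrightarrow> (\<exists>s\<in>S. \<not> int p ^ Suc g dvd env s))"

lemma st_unique:
  assumes "st_ok p S c g1 env" "st_ok p S c g2 env"
  shows "g1 = g2"
proof (rule ccontr)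
  assume ne: "g1 \<noteq> g2"
  { fix a b assume A: "st_ok p S c a env" "st_ok p S c b env" "a < b"
    hence "a < c" unfolding st_ok_def by auto
    then obtain s where s: "s \<in> S" "\<not> int p ^ Suc a dvd env s" using A(1) unfolding st_ok_def by auto
    have "int p ^ b dvd env s" using A(2) s(1) unfolding st_ok_def by auto
    moreover have "int p ^ Suc a dvd int p ^ b" using A(3) by (intro le_imp_power_dvd) simp
    ultimately have False using s(2) dvd_trans by blast }
  thus False using ne assms by (metis linorder_neqE_nat)
qed

lemma st_exists: "\<exists>g. st_ok p S c g env"
proof -
  define Q where "Q = (\<lambda>g. g \<le> c \<and> (\<forall>s\<in>S. int p ^ g dvd env s))"
  have Q0: "Q 0" unfolding Q_def by simp
  define g where "g = (GREATEST g. Q g)"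
  have bound: "\<forall>y. Q y \<longrightarrow> y \<le> c" unfolding Q_def by simp
  have Qg: "Q g" unfolding g_def by (rule GreatestI_nat[of Q 0 c]) (use Q0 bound in auto)
  have gmax: "Q y \<Longrightarrow> y \<le> g" for y unfolding g_def by (rule Greatest_le_nat[of Q y c]) (use bound in auto)
  have "g < c \<longrightarrow> (\<exists>s\<in>S. \<not> int p ^ Suc g dvd env s)"
  proof
    assume "g < c"
    hence "\<not> Q (Suc g)" using gmax by fastforce
    thus "\<exists>s\<in>S. \<not> int p ^ Suc g dvd env s" using \<open>g < c\<close> unfolding Q_def by auto
  qed
  thus ?thesis using Qg unfolding Q_def st_ok_def by blast
qed

definition cap :: "(nat \<Rightarrow> nat) \<Rightarrow> nat \<Rightarrow> nat" where
  "cap e r = (\<Sum>j\<in>{1..r}. e j)"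

lemma cap_Suc: "cap e (Suc r) = cap e r + e (Suc r)"
  unfolding cap_def by simp

definition Phi :: "nat \<Rightarrow> nat \<Rightarrow> int \<Rightarrow> int" where
  "Phi p ei b = int p * b^2 - b * int p ^ ei"

definition Gb :: "nat \<Rightarrow> nat \<Rightarrow> nat \<Rightarrow> nat \<Rightarrow> nat" where
  "Gb p k ei h = card {b\<in>{0..<int p ^ k}. int p ^ h dvd Phi p ei b}"

lemma Gb_G:
  assumes p: "prime p" and ei: "ei \<ge> 1"
  shows "Gb p k ei h = (if h = 0 then p ^ k else G p k (h - 1) (ei - 1))"
proof (cases "h = 0")
  case True
  have "{b\<in>{0..<int p ^ k}. int p ^ h dvd Phi p ei b} = {0..<int p ^ k}" using True by auto
  thus ?thesis unfolding Gb_def using True card_ivl_pow by simp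
next
  case False
  define P where "P = int p"
  have P0: "P \<noteq> 0" using p P_def by simp
  have ph: "Phi p ei b = P * (b * (b - P ^ (ei - 1)))" for b
  proof -
    have "P ^ ei = P * P ^ (ei - 1)" using ei by (metis Suc_diff_1 less_le_trans zero_less_one power_Suc)
    thus ?thesis unfolding Phi_def P_def[symmetric] by (simp add: algebra_simps power2_eq_square)
  qed
  have hh: "P ^ h = P * P ^ (h - 1)" using False by (metis Suc_diff_1 not_gr0 power_Suc)
  have "int p ^ h dvd Phi p ei b \<longleftrightarrow> P ^ (h - 1) dvd b * (b - P ^ (ei - 1))" for b
    unfolding ph hh P_def[symmetric] using P0 by simp
  thus ?thesis unfolding Gb_def G_def P_def using False by simp
qed

lemma Gb_poly: "ei \<ge> 1 \<Longrightarrow> polyF (\<lambda>p. of_nat (Gb p k ei h))"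
proof (cases "h = 0")
  case True
  assume "ei \<ge> 1"
  show ?thesis by (rule polyF_cong[OF polyF_natpow[of k]]) (use True \<open>ei \<ge> 1\<close> in \<open>simp add: Gb_G\<close>)
next
  case False
  assume "ei \<ge> 1"
  show ?thesis by (rule polyF_cong[OF G_poly[of k "h - 1" "ei - 1"]]) (use False \<open>ei \<ge> 1\<close> in \<open>simp add: Gb_G\<close>)
qed



lemma st_trans:
  assumes st: "st_ok p S cR g env" and c: "c' < cR" and Rn: "R \<notin> S" and t: "t \<le> c'"
  shows "st_ok p (insert R S) c' t (env(R := x)) \<longleftrightarrow>
         t \<le> g \<and> int p ^ t dvd x \<and> (t < c' \<and> t \<noteq> g \<longrightarrow> \<not> int p ^ Suc t dvd x)"
proof -
  have g: "g \<le> cR" "\<forall>s\<in>S. int p ^ g dvd env s" "g < cR \<longrightarrow> (\<exists>s\<in>S. \<not> int p ^ Suc g dvd env s)"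
    using st unfolding st_ok_def by auto
  have A: "(\<forall>s\<in>S. int p ^ t dvd env s) \<longleftrightarrow> t \<le> g"
  proof
    assume H: "\<forall>s\<in>S. int p ^ t dvd env s"
    show "t \<le> g"
    proof (rule ccontr)
      assume "\<not> t \<le> g"
      hence "g < cR" "Suc g \<le> t" using t c by auto
      then obtain s where s: "s \<in> S" "\<not> int p ^ Suc g dvd env s" using g by auto
      have "int p ^ Suc g dvd int p ^ t" using \<open>Suc g \<le> t\<close> by (rule le_imp_power_dvd)
      thus False using H s dvd_trans by blast
    qed
  next
    assume "t \<le> g"
    hence "int p ^ t dvd int p ^ g" by (rule le_imp_power_dvd)
    thus "\<forall>s\<in>S. int p ^ t dvd env s" using g dvd_trans by blast
  qed
  have B: "(\<exists>s\<in>S. \<not> int p ^ Suc t dvd env s) \<longleftrightarrow> t = g" if "t \<le> g" "t < c'"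
  proof
    assume "\<exists>s\<in>S. \<not> int p ^ Suc t dvd env s"
    then obtain s where s: "s \<in> S" "\<not> int p ^ Suc t dvd env s" by blast
    show "t = g"
    proof (rule ccontr)
      assume "t \<noteq> g"
      hence "Suc t \<le> g" using that by simp
      hence "int p ^ Suc t dvd int p ^ g" by (rule le_imp_power_dvd)
      thus False using g s dvd_trans by blast
    qed
  next
    assume "t = g"
    thus "\<exists>s\<in>S. \<not> int p ^ Suc t dvd env s" using g that c by auto
  qed
  have env': "\<forall>s\<in>S. (env(R := x)) s = env s" using Rn by auto
  have "st_ok p (insert R S) c' t (env(R := x)) \<longleftrightarrow>
     t \<le> c' \<and> (int p ^ t dvd x \<and> (\<forall>s\<in>S. int p ^ t dvd env s)) \<and>
     (t < c' \<longrightarrow> (\<not> int p ^ Suc t dvd x \<or> (\<exists>s\<in>S. \<not> int p ^ Suc t dvd env s)))"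
    unfolding st_ok_def using env' by auto
  also have "\<dots> \<longleftrightarrow> t \<le> g \<and> int p ^ t dvd x \<and> (t < c' \<and> t \<noteq> g \<longrightarrow> \<not> int p ^ Suc t dvd x)"
    using A B t by auto
  finally show ?thesis .
qed

lemma Rv_split:
  assumes Ri: "Suc R \<le> i" and ei: "env i = int p ^ ei" and f: "f \<in> Box p k {Suc R..i-1}"
  shows "Rv p i env R (f(i := b)) = int p * (Phi p ei b - (\<Sum>s\<in>{Suc R..i-1}. f s * env s))"
proof -
  have I: "{Suc R..i} = insert i {Suc R..i-1}" using Ri by auto
  have "(\<Sum>s\<in>{Suc R..i}. (f(i := b)) s * env s) = b * env i + (\<Sum>s\<in>{Suc R..i-1}. f s * env s)"
    unfolding I by (rule box_update_sum[OF _ _ f]) auto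
  thus ?thesis unfolding Rv_def Phi_def using ei by (simp add: algebra_simps power2_eq_square)
qed



definition NmF :: "nat \<Rightarrow> nat \<Rightarrow> nat \<Rightarrow> nat \<Rightarrow> nat \<Rightarrow> nat \<Rightarrow> rat" where
  "NmF p k sz g ei m = of_nat (Gb p k ei (min g m)) * of_nat p ^ (k * sz - (m - min g m))"

definition LF :: "nat \<Rightarrow> nat \<Rightarrow> nat \<Rightarrow> nat \<Rightarrow> nat \<Rightarrow> nat \<Rightarrow> nat \<Rightarrow> rat" where
  "LF p k sz g c' t ei = (if t \<le> c' \<and> t \<le> g then
     (if t < c' \<and> t \<noteq> g then NmF p k sz g ei (k + t) - NmF p k sz g ei (Suc (k + t)) else NmF p k sz g ei (k + t))
     else 0)"

lemma NmF_poly: "ei \<ge> 1 \<Longrightarrow> polyF (\<lambda>p. NmF p k sz g ei m)"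
  unfolding NmF_def by (intro polyF_mult Gb_poly polyF_pow)

lemma LF_poly: assumes "ei \<ge> 1" shows "polyF (\<lambda>p. LF p k sz g c' t ei)"
proof (cases "t \<le> c' \<and> t \<le> g")
  case False thus ?thesis unfolding LF_def if_not_P[OF False] using polyF_const[of 0] by simp
next
  case T: True
  show ?thesis
  proof (cases "t < c' \<and> t \<noteq> g")
    case True thus ?thesis unfolding LF_def if_P[OF T] if_P[OF True] using NmF_poly[OF assms] by (intro polyF_diff)
  next
    case False thus ?thesis unfolding LF_def if_P[OF T] if_not_P[OF False] using NmF_poly[OF assms] by simp
  qed
qed



lemma sum_if_const_rat:
  "finite A \<Longrightarrow> (\<Sum>x\<in>A. if P x then (c::rat) else 0) = of_nat (card {x\<in>A. P x}) * c"
  by (simp add: sum.If_cases Int_def conj_commute)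

lemma Nm_eq:
  assumes p: "prime p" and S: "finite S" and st: "st_ok p S cR g env" and cR: "k + c' < cR"
    and m: "m \<le> k + min g c'"
  shows "(\<Sum>b\<in>{0..<int p ^ k}. \<Sum>f\<in>Box p k S.
            (if int p ^ m dvd Phi p ei b - (\<Sum>s\<in>S. f s * env s) then 1 else 0 :: rat)) = NmF p k (card S) g ei m"
proof -
  define h where "h = min g m"
  have g: "g \<le> cR" "\<forall>s\<in>S. int p ^ g dvd env s" "g < cR \<longrightarrow> (\<exists>s\<in>S. \<not> int p ^ Suc g dvd env s)"
    using st unfolding st_ok_def by auto
  have hy: "\<forall>s\<in>S. int p ^ h dvd env s"
  proof
    fix s assume "s \<in> S"
    have "int p ^ h dvd int p ^ g" unfolding h_def by (rule le_imp_power_dvd) simp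
    thus "int p ^ h dvd env s" using g(2) \<open>s \<in> S\<close> dvd_trans by blast
  qed
  have hm: "h \<le> m" "m \<le> h + k" using m unfolding h_def by auto
  have wit: "\<exists>s\<in>S. \<not> int p ^ Suc h dvd env s" if "h < m"
  proof -
    have "h = g" using that unfolding h_def by simp
    moreover have "g < cR" using that m cR unfolding h_def by simp
    ultimately show ?thesis using g(3) by simp
  qed
  have inner: "(\<Sum>f\<in>Box p k S. (if int p ^ m dvd w - (\<Sum>s\<in>S. f s * env s) then 1 else 0 :: rat))
      = (if int p ^ h dvd w then of_nat (p ^ (k * card S - (m - h))) else 0)" for w
  proof -
    have "(\<Sum>f\<in>Box p k S. (if int p ^ m dvd w - (\<Sum>s\<in>S. f s * env s) then 1 else 0 :: rat))
        = of_nat (card {f\<in>Box p k S. int p ^ m dvd w - (\<Sum>s\<in>S. f s * env s)}) * 1"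
      by (rule sum_if_const_rat[OF finite_Box[OF S]])
    also have "\<dots> = of_nat (if int p ^ h dvd w then p ^ (k * card S - (m - h)) else 0)"
      using uniform[OF p S hy hm wit, of w] by simp
    finally show ?thesis by simp
  qed
  have "(\<Sum>b\<in>{0..<int p ^ k}. \<Sum>f\<in>Box p k S.
            (if int p ^ m dvd Phi p ei b - (\<Sum>s\<in>S. f s * env s) then 1 else 0 :: rat))
      = (\<Sum>b\<in>{0..<int p ^ k}. (if int p ^ h dvd Phi p ei b then of_nat (p ^ (k * card S - (m - h))) else 0))"
    using inner by simp
  also have "\<dots> = of_nat (Gb p k ei h) * of_nat (p ^ (k * card S - (m - h)))"
    unfolding Gb_def by (rule sum_if_const_rat) simp
  finally show ?thesis unfolding NmF_def h_def by simp
qed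



lemma Qeq_lemma:
  fixes p :: nat
  assumes p: "prime p" and R: "Suc R \<le> i" and eRk: "e R = Suc k"
    and envi: "env i = int p ^ e i" and st: "st_ok p {Suc R..i-1} cR g env"
    and cc': "c' < cR" and t: "t \<le> c'" and f: "f \<in> Box p k {Suc R..i-1}"
  shows "(int p ^ e R dvd Rv p i env R (f(i := b)) \<and>
            st_ok p {R..i-1} c' t (env(R := Rv p i env R (f(i := b)) div int p ^ e R)))
     \<longleftrightarrow> (t \<le> g \<and> int p ^ (k + t) dvd (Phi p (e i) b - (\<Sum>s\<in>{Suc R..i-1}. f s * env s)) \<and>
          (t < c' \<and> t \<noteq> g \<longrightarrow> \<not> int p ^ Suc (k + t) dvd (Phi p (e i) b - (\<Sum>s\<in>{Suc R..i-1}. f s * env s))))"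
proof -
  define P where "P = int p"
  define S where "S = {Suc R..i-1}"
  have P0: "P \<noteq> 0" using p P_def by simp
  have RS: "{R..i-1} = insert R S" unfolding S_def using R by auto
  have RnS: "R \<notin> S" unfolding S_def by auto
  define z where "z = Phi p (e i) b - (\<Sum>s\<in>S. f s * env s)"
  have rv: "Rv p i env R (f(i := b)) = P * z"
    unfolding z_def P_def S_def using Rv_split[of R i env p "e i" f k b] R envi f by simp
  have d1: "int p ^ e R dvd P * z \<longleftrightarrow> P ^ k dvd z" unfolding eRk P_def[symmetric] using P0 by simp
  have d2: "(P * z) div int p ^ e R = z div P ^ k" unfolding eRk P_def[symmetric]
    by (simp add: zdiv_zmult2_eq[symmetric] div_mult_mult1 P0)
  define CT where "CT = (t \<le> g \<and> P ^ (k + t) dvd z \<and> (t < c' \<and> t \<noteq> g \<longrightarrow> \<not> P ^ Suc (k + t) dvd z))"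
  have Q1: "(int p ^ e R dvd Rv p i env R (f(i := b)) \<and>
            st_ok p {R..i-1} c' t (env(R := Rv p i env R (f(i := b)) div int p ^ e R)))
       \<longleftrightarrow> P ^ k dvd z \<and> st_ok p {R..i-1} c' t (env(R := z div P ^ k))"
    by (simp only: rv d1 d2)
  have "P ^ k dvd z \<and> st_ok p {R..i-1} c' t (env(R := z div P ^ k)) \<longleftrightarrow> CT"
  proof (cases "P ^ k dvd z")
    case False
    have "P ^ k dvd P ^ (k + t)" by (rule le_imp_power_dvd) simp
    hence "\<not> P ^ (k + t) dvd z" using False dvd_trans by blast
    hence "\<not> CT" unfolding CT_def by blast
    thus ?thesis using False by blast
  next
    case True
    then obtain w where w: "z = P ^ k * w" by (auto elim: dvdE)
    have dw: "z div P ^ k = w" using w P0 by simp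
    have e1: "P ^ t dvd w \<longleftrightarrow> P ^ (k + t) dvd z" unfolding w power_add using P0 by simp
    have sk: "Suc (k + t) = k + Suc t" by simp
    have e2: "P ^ Suc t dvd w \<longleftrightarrow> P ^ Suc (k + t) dvd z"
      unfolding w sk power_add using P0 by simp
    have "st_ok p {R..i-1} c' t (env(R := w)) \<longleftrightarrow> t \<le> g \<and> P ^ t dvd w \<and> (t < c' \<and> t \<noteq> g \<longrightarrow> \<not> P ^ Suc t dvd w)"
      unfolding RS P_def by (rule st_trans[OF st[folded S_def] cc' RnS t])
    also have "\<dots> \<longleftrightarrow> CT" unfolding CT_def e1 e2 ..
    finally have "st_ok p {R..i-1} c' t (env(R := z div P ^ k)) \<longleftrightarrow> CT" unfolding dw .
    thus ?thesis using True by blast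
  qed
  thus ?thesis using Q1 unfolding CT_def z_def S_def P_def by blast
qed

lemma local_count:
  fixes p :: nat
  assumes p: "prime p" and R: "Suc R \<le> i" and eR: "e R \<ge> 1"
    and envi: "env i = int p ^ e i" and st: "st_ok p {Suc R..i-1} cR g env"
    and cR: "cR = c' + e R" and t: "t \<le> c'"
  shows "of_nat (card {row\<in>Box p (e R - 1) {Suc R..i}. int p ^ e R dvd Rv p i env R row \<and>
            st_ok p {R..i-1} c' t (env(R := Rv p i env R row div int p ^ e R))})
         = LF p (e R - 1) (card {Suc R..i-1}) g c' t (e i)"
proof -
  define k where "k = e R - 1"
  define S where "S = {Suc R..i-1}"
  define P where "P = int p"
  have eRk: "e R = Suc k" using eR k_def by simp
  have P0: "P \<noteq> 0" using p P_def by simp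
  have S: "finite S" "i \<notin> S" "R \<notin> S" unfolding S_def by auto
  have I: "{Suc R..i} = insert i S" unfolding S_def using R by auto
  have RS: "{R..i-1} = insert R S" unfolding S_def using R by auto
  have ccR: "k + c' < cR" using cR eRk by simp
  have cc': "c' < cR" using ccR by simp
  let ?T = "\<lambda>f. \<Sum>s\<in>S. f s * env s"
  define CT where "CT = (\<lambda>z. t \<le> g \<and> P ^ (k + t) dvd z \<and> (t < c' \<and> t \<noteq> g \<longrightarrow> \<not> P ^ Suc (k + t) dvd z))"
  let ?Q = "\<lambda>row. int p ^ e R dvd Rv p i env R row \<and> st_ok p {R..i-1} c' t (env(R := Rv p i env R row div int p ^ e R))"
  have Qeq: "?Q (f(i := b)) \<longleftrightarrow> CT (Phi p (e i) b - ?T f)" if f: "f \<in> Box p k S" for f b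
    unfolding CT_def P_def S_def using Qeq_lemma[OF p R eRk envi st cc' t f[unfolded S_def], of b] .
  have "card {row\<in>Box p k {Suc R..i}. ?Q row} = (\<Sum>row\<in>Box p k (insert i S). if ?Q row then 1 else 0)"
    unfolding I by (rule card_filter_sum[OF finite_Box]) (use S in simp)
  also have "\<dots> = (\<Sum>b\<in>{0..<int p ^ k}. \<Sum>f\<in>Box p k S. if ?Q (f(i:=b)) then 1 else 0)"
    by (rule sum_Box_insert[OF S(2)])
  also have "\<dots> = (\<Sum>b\<in>{0..<int p ^ k}. \<Sum>f\<in>Box p k S. if CT (Phi p (e i) b - ?T f) then 1 else 0)"
    using Qeq by (intro sum.cong refl) simp
  finally have C: "of_nat (card {row\<in>Box p k {Suc R..i}. ?Q row}) =
      (\<Sum>b\<in>{0..<int p ^ k}. \<Sum>f\<in>Box p k S. if CT (Phi p (e i) b - ?T f) then 1 else 0 :: rat)"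
    by (simp only: of_nat_sum if_distrib[of rat_of_nat] of_nat_1 of_nat_0)
  define A where "A = (\<lambda>m. (\<Sum>b\<in>{0..<int p ^ k}. \<Sum>f\<in>Box p k S.
            (if int p ^ m dvd Phi p (e i) b - ?T f then 1 else 0 :: rat)))"
  have ind: "(if CT z then 1 else 0 :: rat) = (if t \<le> g then (if t < c' \<and> t \<noteq> g then
      (if P ^ (k + t) dvd z then 1 else 0) - (if P ^ Suc (k + t) dvd z then 1 else 0) else (if P ^ (k + t) dvd z then 1 else 0)) else 0)" for z
  proof -
    have "P ^ (k + t) dvd P ^ Suc (k + t)" by (rule le_imp_power_dvd) simp
    hence "P ^ Suc (k + t) dvd z \<Longrightarrow> P ^ (k + t) dvd z" using dvd_trans by blast
    thus ?thesis unfolding CT_def by auto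
  qed
  have "(\<Sum>b\<in>{0..<int p ^ k}. \<Sum>f\<in>Box p k S. if CT (Phi p (e i) b - ?T f) then 1 else 0 :: rat)
      = (if t \<le> g then (if t < c' \<and> t \<noteq> g then A (k + t) - A (Suc (k + t)) else A (k + t)) else 0)"
  proof (cases "t \<le> g \<and> t < c' \<and> t \<noteq> g")
    case True
    thus ?thesis unfolding ind A_def P_def by (simp add: sum_subtractf)
  next
    case False
    thus ?thesis unfolding ind A_def P_def by auto
  qed
  also have "\<dots> = LF p k (card S) g c' t (e i)"
  proof -
    have "A (k + t) = NmF p k (card S) g (e i) (k + t)" if "t \<le> g"
    proof -
      have m: "k + t \<le> k + min g c'" using that t by simp
      show ?thesis unfolding A_def by (rule Nm_eq[OF p S(1) st[folded S_def] ccR m])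
    qed
    moreover have "A (Suc (k + t)) = NmF p k (card S) g (e i) (Suc (k + t))" if "t \<le> g" "t < c'" "t \<noteq> g"
    proof -
      have m: "Suc (k + t) \<le> k + min g c'" using that by simp
      show ?thesis unfolding A_def by (rule Nm_eq[OF p S(1) st[folded S_def] ccR m])
    qed
    ultimately show ?thesis unfolding LF_def using t by auto
  qed
  finally have X: "(\<Sum>b\<in>{0..<int p ^ k}. \<Sum>f\<in>Box p k S. if CT (Phi p (e i) b - ?T f) then 1 else 0 :: rat) = LF p k (card S) g c' t (e i)" .
  show ?thesis unfolding k_def[symmetric] S_def[symmetric] using C X by (rule trans)
qed



lemma sum_unique_if:
  assumes "finite T" "t0 \<in> T" "\<And>t. t \<in> T \<Longrightarrow> P t \<longleftrightarrow> t = t0"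
  shows "(\<Sum>t\<in>T. if P t then a t else (0::rat)) = a t0"
proof -
  have "(\<Sum>t\<in>T. if P t then a t else (0::rat)) = (\<Sum>t\<in>T. if t = t0 then a t else 0)"
    using assms(3) by (intro sum.cong) auto
  thus ?thesis using assms(1,2) by simp
qed

lemma cnt_poly:
  assumes ei: "e i \<ge> 1" and epos: "\<forall>j\<in>{1..i-1}. e j \<ge> 1"
  shows "r \<le> i - 1 \<Longrightarrow> g \<le> cap e r \<Longrightarrow> \<exists>Q :: rat poly. \<forall>p env. prime p \<and> env i = int p ^ e i \<and>
            st_ok p {Suc r..i-1} (cap e r) g env \<longrightarrow> of_nat (cnt p i e r env) = poly Q (of_nat p)"
proof (induction r arbitrary: g)
  case 0
  show ?case by (rule exI[of _ "[:1:]"]) simp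
next
  case (Suc r)
  define R where "R = Suc r"
  define c' where "c' = cap e r"
  define k where "k = e R - 1"
  define sz where "sz = card {Suc R..i-1}"
  have Ri: "Suc R \<le> i" using Suc.prems R_def by simp
  have eR: "e R \<ge> 1" using epos Suc.prems R_def by auto
  have cR: "cap e R = c' + e R" unfolding R_def c'_def by (rule cap_Suc)
  have "\<forall>t\<in>{..c'}. \<exists>Q :: rat poly. \<forall>p env. prime p \<and> env i = int p ^ e i \<and>
            st_ok p {Suc r..i-1} (cap e r) t env \<longrightarrow> of_nat (cnt p i e r env) = poly Q (of_nat p)"
  proof
    fix t assume "t \<in> {..c'}"
    hence tl: "t \<le> cap e r" unfolding c'_def by simp
    have rl: "r \<le> i - 1" using Suc.prems by simp
    show "\<exists>Q :: rat poly. \<forall>p env. prime p \<and> env i = int p ^ e i \<and>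
            st_ok p {Suc r..i-1} (cap e r) t env \<longrightarrow> of_nat (cnt p i e r env) = poly Q (of_nat p)"
      using Suc.IH[OF rl tl] by simp
  qed
  from bchoice[OF this] obtain Qf :: "nat \<Rightarrow> rat poly" where Qf0: "\<forall>t\<in>{..c'}. \<forall>p env. prime p \<and> env i = int p ^ e i \<and>
            st_ok p {Suc r..i-1} (cap e r) t env \<longrightarrow> of_nat (cnt p i e r env) = poly (Qf t) (of_nat p)"
    by (elim exE)
  have Qf: "\<And>t p env. t \<in> {..c'} \<Longrightarrow> prime p \<Longrightarrow> env i = int p ^ e i \<Longrightarrow>
            st_ok p {Suc r..i-1} (cap e r) t env \<Longrightarrow> of_nat (cnt p i e r env) = poly (Qf t) (of_nat p)"
    using Qf0 by blast
  have "\<forall>t\<in>{..c'}. \<exists>L. \<forall>p. prime p \<longrightarrow> LF p k sz g c' t (e i) = poly L (of_nat p)"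
    using LF_poly[OF ei] unfolding polyF_def by blast
  from bchoice[OF this] obtain Lf where Lf0: "\<forall>t\<in>{..c'}. \<forall>p. prime p \<longrightarrow> LF p k sz g c' t (e i) = poly (Lf t) (of_nat p)"
    by (elim exE)
  have Lf: "\<And>t p. t \<in> {..c'} \<Longrightarrow> prime p \<Longrightarrow> LF p k sz g c' t (e i) = poly (Lf t) (of_nat p)"
    using Lf0 by blast
  define Q where "Q = (\<Sum>t\<in>{..c'}. Qf t * Lf t)"
  show ?case
  proof (rule exI[of _ Q], intro allI impI)
    fix p env assume A: "prime p \<and> env i = int p ^ e i \<and> st_ok p {Suc (Suc r)..i-1} (cap e (Suc r)) g env"
    hence p: "prime p" and envi: "env i = int p ^ e i" and st: "st_ok p {Suc R..i-1} (cap e R) g env"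
      unfolding R_def by auto
    let ?B = "Box p k {Suc R..i}"
    let ?dv = "\<lambda>row. int p ^ e R dvd Rv p i env R row"
    let ?env = "\<lambda>row. env(R := Rv p i env R row div int p ^ e R)"
    have fB: "finite ?B" by (rule finite_Box) simp
    have step: "(if ?dv row then of_nat (cnt p i e r (?env row)) else 0) =
        (\<Sum>t\<in>{..c'}. if ?dv row \<and> st_ok p {R..i-1} c' t (?env row) then poly (Qf t) (of_nat p) else 0)" for row
    proof (cases "?dv row")
      case False thus ?thesis by simp
    next
      case True
      obtain t0 where t0: "st_ok p {R..i-1} c' t0 (?env row)" using st_exists by blast
      have t0c: "t0 \<in> {..c'}" using t0 unfolding st_ok_def by simp
      have ei': "(?env row) i = int p ^ e i" using envi Ri by simp
      have "of_nat (cnt p i e r (?env row)) = poly (Qf t0) (of_nat p)"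
        using Qf[of t0 p "?env row", OF t0c p ei'] t0 unfolding R_def c'_def by simp
      moreover have "(\<Sum>t\<in>{..c'}. if st_ok p {R..i-1} c' t (?env row) then poly (Qf t) (of_nat p) else 0)
          = poly (Qf t0) (of_nat p)"
        by (rule sum_unique_if[of "{..c'}" t0 "\<lambda>t. st_ok p {R..i-1} c' t (?env row)" "\<lambda>t. poly (Qf t) (of_nat p)", OF _ t0c])
           (use t0 st_unique in blast)+
      ultimately show ?thesis using True by simp
    qed
    have "of_nat (cnt p i e (Suc r) env) = (\<Sum>row\<in>?B. (if ?dv row then of_nat (cnt p i e r (?env row)) else 0 :: rat))"
      unfolding R_def k_def by (simp only: cnt.simps of_nat_sum if_distrib[of rat_of_nat] of_nat_0)
    also have "\<dots> = (\<Sum>row\<in>?B. \<Sum>t\<in>{..c'}. if ?dv row \<and> st_ok p {R..i-1} c' t (?env row) then poly (Qf t) (of_nat p) else 0)"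
      by (rule sum.cong[OF refl]) (rule step)
    also have "\<dots> = (\<Sum>t\<in>{..c'}. \<Sum>row\<in>?B. if ?dv row \<and> st_ok p {R..i-1} c' t (?env row) then poly (Qf t) (of_nat p) else 0)"
      by (rule sum.swap)
    also have "\<dots> = (\<Sum>t\<in>{..c'}. of_nat (card {row\<in>?B. ?dv row \<and> st_ok p {R..i-1} c' t (?env row)}) * poly (Qf t) (of_nat p))"
      by (intro sum.cong refl sum_if_const_rat fB)
    also have "\<dots> = (\<Sum>t\<in>{..c'}. LF p k sz g c' t (e i) * poly (Qf t) (of_nat p))"
    proof (intro sum.cong refl)
      fix t assume t: "t \<in> {..c'}"
      have "of_nat (card {row\<in>?B. ?dv row \<and> st_ok p {R..i-1} c' t (?env row)}) = LF p k sz g c' t (e i)"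
      proof -
        have tt: "t \<le> c'" using t by simp
        show ?thesis unfolding k_def sz_def by (rule local_count[OF p Ri eR envi st cR tt])
      qed
      thus "of_nat (card {row\<in>?B. ?dv row \<and> st_ok p {R..i-1} c' t (?env row)}) * poly (Qf t) (of_nat p)
          = LF p k sz g c' t (e i) * poly (Qf t) (of_nat p)" by simp
    qed
    also have "\<dots> = poly Q (of_nat p)"
    proof (unfold Q_def poly_sum, intro sum.cong refl)
      fix t assume t: "t \<in> {..c'}"
      show "LF p k sz g c' t (e i) * poly (Qf t) (of_nat p) = poly (Qf t * Lf t) (of_nat p)"
        using Lf[OF t p] by (simp add: mult.commute)
    qed
    finally show "of_nat (cnt p i e (Suc r) env) = poly Q (of_nat p)" .
  qed
qed



theorem proposition3p1:
  fixes n i :: nat and e :: "nat \<Rightarrow> nat"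
  assumes "n \<ge> 2" and "1 \<le> i" and "i \<le> n - 1"
    and "\<forall>r \<in> {1..n - 1}. e r > 0"
  shows "\<exists>P :: rat poly. \<forall>p :: nat. prime p \<longrightarrow>
           of_nat (count_sq n i e p) = poly P (of_nat p)"
proof -
  have "i \<in> {1..n-1}" using assms by simp
  hence ei: "e i \<ge> 1" using assms(4) by (simp add: Suc_le_eq)
  have epos: "\<forall>j\<in>{1..i-1}. e j \<ge> 1"
  proof
    fix j assume "j \<in> {1..i-1}"
    hence "1 \<le> j" "j \<le> i - 1" by auto
    hence "j \<in> {1..n-1}" using assms(3) by simp
    thus "e j \<ge> 1" using assms(4) by (simp add: Suc_le_eq)
  qed
  obtain Q :: "rat poly" where Q: "\<forall>p env. prime p \<and> env i = int p ^ e i \<and>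
      st_ok p {Suc (i-1)..i-1} (cap e (i-1)) (cap e (i-1)) env \<longrightarrow> of_nat (cnt p i e (i-1) env) = poly Q (of_nat p)"
    using cnt_poly[OF ei epos, of "i-1" "cap e (i-1)"] by auto
  show ?thesis
  proof (rule exI[of _ Q], intro allI impI)
    fix p :: nat assume p: "prime p"
    define env0 :: "nat \<Rightarrow> int" where "env0 = (\<lambda>s. int p ^ e i)"
    have p0: "p > 0" using p prime_gt_0_nat by simp
    have st: "st_ok p {Suc (i-1)..i-1} (cap e (i-1)) (cap e (i-1)) env0" unfolding st_ok_def by simp
    have I: "{Suc (i - 1)..i} = {i}" using assms by auto
    have eq: "(a \<in> tuples i e p \<and> in_int_col_span n (Amat n e (int p) a)
         (hadamard (col (Amat n e (int p) a) i) (col (Amat n e (int p) a) i))) \<longleftrightarrow>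
         (a \<in> Tup p i e (i - 1) \<and> good p i e (i - 1) env0 a)" for a
    proof (cases "a \<in> Tup p i e (i - 1)")
      case True
      have "good p i e (i - 1) env0 a \<longleftrightarrow>
        (\<exists>x. (\<forall>s\<in>{Suc (i-1)..i}. x s = env0 s) \<and> (\<forall>j\<in>{1..i-1}. int p ^ e j * x j = Rv p i x j (a j)))"
        by (rule good_iff[OF p0]) simp
      also have "\<dots> \<longleftrightarrow> (\<exists>x. x i = int p ^ e i \<and> (\<forall>j\<in>{1..i-1}. int p ^ e j * x j = Rv p i x j (a j)))"
        unfolding I env0_def by simp
      also have "\<dots> \<longleftrightarrow> in_int_col_span n (Amat n e (int p) a)
         (hadamard (col (Amat n e (int p) a) i) (col (Amat n e (int p) a) i))"
        by (rule span_iff[OF assms(1-3) p0 True, symmetric])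
      finally show ?thesis using True tuples_Tup by simp
    next
      case False thus ?thesis using tuples_Tup by simp
    qed
    have "count_sq n i e p = card {a\<in>Tup p i e (i - 1). good p i e (i - 1) env0 a}"
      unfolding count_sq_def using eq by (intro arg_cong[where f=card] Collect_cong) blast
    also have "\<dots> = cnt p i e (i - 1) env0" by (rule card_good)
    finally have "of_nat (count_sq n i e p) = (of_nat (cnt p i e (i - 1) env0) :: rat)" by simp
    also have "\<dots> = poly Q (of_nat p)" using Q p st unfolding env0_def by simp
    finally show "of_nat (count_sq n i e p) = poly Q (of_nat p)" .
  qed
qed


end
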